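(* Let $b_0,\dots,b_{n-1}\in\{0,1\}$, $D=\Theta^{-1}[b_0,\dots,b_{n-1}]_0\subset\Omega$, and let $1\le r<k\le s$ be integers. Then $\mathbb P(\{\omega_0=s\}\cap D)\le\mathbb P(\{\omega_0=r\}\cap D)+\mathbb P(\{\omega_0=k\}\cap D)$.
   Context: $\Omega=\mathbb N_+^{\mathbb N}$ with $\mathbb P$ the product measure $\mathbb P[a_0,\dots,a_{m-1}]=\prod_{j<m}2^{-a_j}$ (i.i.d. coordinates with $\mathbb P(\omega_j=a)=2^{-a}$). $\theta(a_1,a_2)=1$ if $a_2=a_1+1$ and $0$ otherwise; $\Theta:\Omega\to\{0,1\}^{\mathbb N}$, $(\Theta\omega)_j=\theta(\omega_j,\omega_{j+1})$; $[b_0,\dots,b_{n-1}]_0=\{\gamma\in\{0,1\}^{\mathbb N}:\gamma_j=b_j,0\le j<n\}$. *)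

theory Defs
  imports "HOL-Probability.Probability"
begin

text \<open>One-coordinate law on the positive integers: P(a) = 2^(-a) for a >= 1, 0 at 0.
  Realised as Suc of a geometric(1/2) variable (pmf n = (1/2)^n * (1/2)).\<close>
definition coord_pmf :: "nat pmf" where
  "coord_pmf = map_pmf Suc (geometric_pmf (1/2))"

definition Pm :: "(nat \<Rightarrow> nat) measure" where
  "Pm = (\<Pi>\<^sub>M j\<in>(UNIV::nat set). measure_pmf coord_pmf)"

definition theta :: "nat \<Rightarrow> nat \<Rightarrow> nat" where
  "theta a1 a2 = (if a2 = a1 + 1 then 1 else 0)"

definition Theta :: "(nat \<Rightarrow> nat) \<Rightarrow> (nat \<Rightarrow> nat)" where
  "Theta \<omega> = (\<lambda>j. theta (\<omega> j) (\<omega> (Suc j)))"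

definition cyl0 :: "nat list \<Rightarrow> (nat \<Rightarrow> nat) set" where
  "cyl0 b = {\<gamma>. \<forall>j<length b. \<gamma> j = b ! j}"

end

theory Submission
  imports Defs
begin


interpretation seq: sequence_space "measure_pmf coord_pmf"
  by unfold_locales

lemma space_Pm[simp]: "space Pm = UNIV"
  by (simp add: Pm_def space_PiM)

lemma sets_coord[simp]: "sets (measure_pmf coord_pmf) = UNIV" by simp

lemma meas_shift[measurable]: "(\<lambda>\<omega> j. \<omega> (Suc j)) \<in> Pm \<rightarrow>\<^sub>M Pm"
  unfolding Pm_def
  by (rule measurable_PiM_single'[where f="\<lambda>j \<omega>. \<omega> (Suc j)"]) (auto simp: space_PiM)

lemma meas_coord[measurable]: "(\<lambda>\<omega>. \<omega> j) \<in> Pm \<rightarrow>\<^sub>M count_space UNIV"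
  unfolding Pm_def by simp

lemma meas_theta: "(\<lambda>\<omega>. theta (\<omega> j) (\<omega> (Suc j))) \<in> Pm \<rightarrow>\<^sub>M count_space UNIV"
proof (rule measurable_compose_countable[where f="\<lambda>i \<omega>. theta i (\<omega> (Suc j))" and g="\<lambda>\<omega>. \<omega> j"])
  fix i :: nat
  show "(\<lambda>\<omega>. theta i (\<omega> (Suc j))) \<in> Pm \<rightarrow>\<^sub>M count_space UNIV"
    using measurable_compose[OF meas_coord[of "Suc j"], of "theta i" "count_space UNIV"] by simp
qed (rule meas_coord)

lemma meas_cyl: "{\<omega>. Theta \<omega> \<in> cyl0 b} \<in> sets Pm"
proof -
  have "{\<omega>. Theta \<omega> \<in> cyl0 b} = (\<Inter>j\<in>{..<length b}. (\<lambda>\<omega>. theta (\<omega> j) (\<omega> (Suc j))) -` {b!j} \<inter> space Pm)"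
    by (auto simp: Theta_def cyl0_def)
  also have "\<dots> \<in> sets Pm"
    by (intro sets.countable_INT'' measurable_sets[OF meas_theta]) (auto simp flip: space_Pm)
  finally show ?thesis .
qed

lemma shift_measure:
  assumes B: "B \<in> sets Pm"
  shows "measure Pm {\<omega>. \<omega> 0 = a \<and> (\<lambda>j. \<omega> (Suc j)) \<in> B} = pmf coord_pmf a * measure Pm B"
proof -
  let ?M = "measure_pmf coord_pmf"
  let ?f = "\<lambda>(s, \<omega>). case_nat s \<omega> :: nat \<Rightarrow> nat"
  have A: "{\<omega>. \<omega> 0 = a \<and> (\<lambda>j. \<omega> (Suc j)) \<in> B} \<in> sets Pm"
  proof -
    have "{\<omega>. \<omega> 0 = a \<and> (\<lambda>j. \<omega> (Suc j)) \<in> B} = {\<omega>\<in>space Pm. \<omega> 0 = a} \<inter> ((\<lambda>\<omega> j. \<omega> (Suc j)) -` B \<inter> space Pm)"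
      by auto
    also have "\<dots> \<in> sets Pm" using B by measurable
    finally show ?thesis .
  qed
  have fm: "?f \<in> ?M \<Otimes>\<^sub>M Pm \<rightarrow>\<^sub>M Pm"
    unfolding Pm_def by measurable
  have "measure Pm {\<omega>. \<omega> 0 = a \<and> (\<lambda>j. \<omega> (Suc j)) \<in> B}
      = measure (distr (?M \<Otimes>\<^sub>M Pm) Pm ?f) {\<omega>. \<omega> 0 = a \<and> (\<lambda>j. \<omega> (Suc j)) \<in> B}"
    using seq.PiM_iter unfolding Pm_def by simp
  also have "\<dots> = measure (?M \<Otimes>\<^sub>M Pm) (?f -` {\<omega>. \<omega> 0 = a \<and> (\<lambda>j. \<omega> (Suc j)) \<in> B} \<inter> space (?M \<Otimes>\<^sub>M Pm))"
    by (rule measure_distr[OF fm A])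
  also have "?f -` {\<omega>. \<omega> 0 = a \<and> (\<lambda>j. \<omega> (Suc j)) \<in> B} \<inter> space (?M \<Otimes>\<^sub>M Pm) = {a} \<times> B"
    using sets.sets_into_space[OF B]
    by (auto simp: space_pair_measure)
  also have "measure (?M \<Otimes>\<^sub>M Pm) ({a} \<times> B) = measure ?M {a} * measure Pm B"
    using B unfolding Pm_def measure_def
    by (subst seq.P.emeasure_pair_measure_Times) (auto simp: enn2real_mult)
  finally show ?thesis by (simp add: measure_pmf_single)
qed


lemma prob_Pm: "prob_space Pm"
  unfolding Pm_def by (rule prob_space_PiM) (simp add: prob_space_measure_pmf)

interpretation Pp: prob_space Pm by (rule prob_Pm)

lemma pmf_coord_Suc: "pmf coord_pmf (Suc n) = (1/2::real)^(Suc n)"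
proof -
  have "pmf coord_pmf (Suc n) = pmf (geometric_pmf (1/2)) n"
    unfolding coord_pmf_def by (rule pmf_map_inj') (simp add: inj_def)
  then show ?thesis by simp
qed

lemma pmf_coord_mono: "1 \<le> k \<Longrightarrow> k \<le> s \<Longrightarrow> pmf coord_pmf s \<le> pmf coord_pmf k"
proof -
  assume "1 \<le> k" "k \<le> s"
  then obtain k' s' where "k = Suc k'" "s = Suc s'" "k' \<le> s'"
    by (cases k; cases s) auto
  then show ?thesis by (simp add: pmf_coord_Suc power_decreasing)
qed

definition Q :: "nat list \<Rightarrow> nat \<Rightarrow> real" where
  "Q b a = measure Pm {\<omega>. \<omega> 0 = a \<and> Theta \<omega> \<in> cyl0 b}"

lemma Q_Nil: "Q [] a = pmf coord_pmf a"
proof -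
  have "{\<omega>. \<omega> 0 = a \<and> Theta \<omega> \<in> cyl0 []} = {\<omega>. \<omega> 0 = a \<and> (\<lambda>j. \<omega> (Suc j)) \<in> space Pm}"
    by (simp add: cyl0_def)
  then show ?thesis using shift_measure[OF sets.top[of Pm], of a] by (simp add: Q_def Pp.prob_space[unfolded space_Pm])
qed

lemma meas_cyl_first: "{\<omega>. P (\<omega> 0) \<and> Theta \<omega> \<in> cyl0 b} \<in> sets Pm"
proof -
  have "{\<omega>. P (\<omega> 0) \<and> Theta \<omega> \<in> cyl0 b} = ((\<lambda>\<omega>. \<omega> 0) -` {x. P x} \<inter> space Pm) \<inter> {\<omega>. Theta \<omega> \<in> cyl0 b}"
    by auto
  also have "\<dots> \<in> sets Pm"
    by (intro sets.Int meas_cyl measurable_sets[OF meas_coord]) auto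
  finally show ?thesis .
qed

lemma Q_Cons: "Q (c # b) a = pmf coord_pmf a * measure Pm {\<omega>. theta a (\<omega> 0) = c \<and> Theta \<omega> \<in> cyl0 b}"
proof -
  have "{\<omega>. \<omega> 0 = a \<and> Theta \<omega> \<in> cyl0 (c # b)} =
        {\<omega>. \<omega> 0 = a \<and> (\<lambda>j. \<omega> (Suc j)) \<in> {\<omega>. theta a (\<omega> 0) = c \<and> Theta \<omega> \<in> cyl0 b}}"
    by (auto simp: cyl0_def Theta_def All_less_Suc2)
  then show ?thesis
    unfolding Q_def using shift_measure[OF meas_cyl_first] by simp
qed

lemma main: "1 \<le> r \<Longrightarrow> r < k \<Longrightarrow> k \<le> s \<Longrightarrow> Q b s \<le> Q b r + Q b k"
proof (induction b arbitrary: r k s)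
  case Nil
  then show ?case using pmf_coord_mono[of k s] pmf_nonneg[of coord_pmf r]
    by (auto simp: Q_Nil intro: add_increasing)
next
  case (Cons c b)
  let ?p = "pmf coord_pmf"
  define C where "C = measure Pm {\<omega>. Theta \<omega> \<in> cyl0 b}"
  have ps: "?p s \<le> ?p k" "?p k \<le> ?p r" "?p s \<le> ?p r"
    using Cons.prems pmf_coord_mono by auto
  have pn: "?p s \<ge> 0" "?p k \<ge> 0" "?p r \<ge> 0" by auto
  have Qn: "\<And>x. Q b x \<ge> 0" by (simp add: Q_def)
  have set1: "{\<omega>. theta a (\<omega> 0) = 1 \<and> Theta \<omega> \<in> cyl0 b} = {\<omega>. \<omega> 0 = Suc a \<and> Theta \<omega> \<in> cyl0 b}" for a
    by (auto simp: theta_def)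
  have set0: "{\<omega>. theta a (\<omega> 0) = 0 \<and> Theta \<omega> \<in> cyl0 b} = {\<omega>. Theta \<omega> \<in> cyl0 b} - {\<omega>. \<omega> 0 = Suc a \<and> Theta \<omega> \<in> cyl0 b}" for a
    by (auto simp: theta_def)
  have setx: "c \<noteq> 0 \<Longrightarrow> c \<noteq> 1 \<Longrightarrow> {\<omega>. theta a (\<omega> 0) = c \<and> Theta \<omega> \<in> cyl0 b} = {}" for a
    by (auto simp: theta_def)
  have Q0: "measure Pm {\<omega>. theta a (\<omega> 0) = 0 \<and> Theta \<omega> \<in> cyl0 b} = C - Q b (Suc a)" for a
    unfolding set0 C_def Q_def
    by (rule Pp.finite_measure_Diff) (auto intro: meas_cyl meas_cyl_first[where P="\<lambda>x. x = Suc a", simplified])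
  have Cge: "Q b (Suc r) + Q b (Suc k) \<le> C"
  proof -
    have "Q b (Suc r) + Q b (Suc k) = measure Pm ({\<omega>. \<omega> 0 = Suc r \<and> Theta \<omega> \<in> cyl0 b} \<union> {\<omega>. \<omega> 0 = Suc k \<and> Theta \<omega> \<in> cyl0 b})"
      unfolding Q_def using Cons.prems
      by (subst Pp.finite_measure_Union) (auto intro: meas_cyl_first[where P="\<lambda>x. x = Suc r", simplified] meas_cyl_first[where P="\<lambda>x. x = Suc k", simplified])
    also have "\<dots> \<le> C" unfolding C_def
      by (rule Pp.finite_measure_mono) (auto intro: meas_cyl)
    finally show ?thesis .
  qed
  consider "c = 1" | "c = 0" | "c \<noteq> 0 \<and> c \<noteq> 1" by blast
  then show ?case
  proof cases
    case 1
    have IH: "Q b (Suc s) \<le> Q b (Suc r) + Q b (Suc k)"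
      using Cons.prems by (intro Cons.IH) auto
    have QC: "Q (c#b) a = ?p a * Q b (Suc a)" for a
      by (simp only: Q_Cons 1 set1 Q_def[of b])
    have "Q (c#b) s = ?p s * Q b (Suc s)" by (rule QC)
    also have "\<dots> \<le> ?p s * (Q b (Suc r) + Q b (Suc k))"
      using IH pn by (intro mult_left_mono) auto
    also have "\<dots> = ?p s * Q b (Suc r) + ?p s * Q b (Suc k)" by (simp add: algebra_simps)
    also have "\<dots> \<le> ?p r * Q b (Suc r) + ?p k * Q b (Suc k)"
      using ps Qn by (intro add_mono mult_right_mono) auto
    also have "\<dots> = Q (c#b) r + Q (c#b) k" by (simp only: QC)
    finally show ?thesis .
  next
    case 2
    define x where "x = Q b (Suc r)"
    define y where "y = Q b (Suc k)"
    have xy: "x \<ge> 0" "y \<ge> 0" "x + y \<le> C" using Qn Cge by (auto simp: x_def y_def)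
    have "Q (c#b) s = ?p s * (C - Q b (Suc s))" using 2 by (simp add: Q_Cons Q0)
    also have "\<dots> \<le> ?p s * C" using Qn pn by (simp add: mult_left_mono)
    also have "\<dots> \<le> ?p k * C" using ps xy by (intro mult_right_mono) auto
    also have "\<dots> \<le> ?p r * (C - x) + ?p k * (C - y)"
    proof -
      have "?p k * y \<le> ?p r * y" using ps xy by (intro mult_right_mono) auto
      moreover have "?p r * y \<le> ?p r * (C - x)" using xy pn by (intro mult_left_mono) auto
      ultimately show ?thesis by (simp add: algebra_simps)
    qed
    also have "\<dots> = Q (c#b) r + Q (c#b) k" using 2 by (simp add: Q_Cons Q0 x_def y_def)
    finally show ?thesis .
  next
    case 3
    then show ?thesis by (simp add: Q_Cons setx)
  qed
qed

theorem lemma5: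
  fixes b :: "nat list" and r k s :: nat
  assumes "set b \<subseteq> {0, 1}"
    and "1 \<le> r" and "r < k" and "k \<le> s"
  defines "D \<equiv> Theta -` cyl0 b \<inter> space Pm"
  shows "measure Pm ({\<omega> \<in> space Pm. \<omega> 0 = s} \<inter> D)
           \<le> measure Pm ({\<omega> \<in> space Pm. \<omega> 0 = r} \<inter> D)
            + measure Pm ({\<omega> \<in> space Pm. \<omega> 0 = k} \<inter> D)"
proof -
  have eq: "{\<omega> \<in> space Pm. \<omega> 0 = a} \<inter> D = {\<omega>. \<omega> 0 = a \<and> Theta \<omega> \<in> cyl0 b}" for a
    by (auto simp: D_def)
  show ?thesis unfolding eq using main[OF assms(2-4), of b] by (simp add: Q_def)
qed

end
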